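(* For every $n\ge 2$ there is a bijection between the set of connected rooted chord diagrams with $n$ chords and the set of indecomposable rooted chord diagrams with $n$ chords having exactly two connected components. Consequently, if $I_2(x)$ denotes the ordinary generating function (by number of chords) of indecomposable chord diagrams with exactly two connected components, then $I_2(x)=C(x)-x$.
   Context: A (rooted) chord diagram with $n$ chords is a perfect matching of $\{1,\dots,2n\}$; its pairs $\{a<b\}$ are the chords. Two chords $\{a<b\},\{c<d\}$ cross if $a<c<b<d$ or $c<a<d<b$. The intersection graph has the chords as vertices and edges between crossing chords; its connected components are the connected components of the diagram, and a nonempty diagram is connected if its intersection graph is connected. A chord diagram with $n$ chords is indecomposable if there is no $k$ with $0<k<n$ such that $\{1,\dots,2k\}$ is a union of chords (the empty diagram is indecomposable by convention). $C(x)=\sum_n C_n x^n$ is the ordinary generating function of connected chord diagrams ($C_n$ = number with $n$ chords; $C(x)=x+x^2+4x^3+27x^4+\cdots$). *)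

theory Defs
  imports "HOL-Computational_Algebra.Formal_Power_Series"
begin

type_synonym chord = "nat \<times> nat"

text \<open>A rooted chord diagram with n chords: a perfect matching of {1..2n},
  each chord stored as a pair (a,b) with a < b.\<close>
definition chord_diagram :: "nat \<Rightarrow> chord set \<Rightarrow> bool" where
  "chord_diagram n M \<longleftrightarrow>
     (\<forall>(a,b)\<in>M. a < b \<and> a \<in> {1..2*n} \<and> b \<in> {1..2*n}) \<and>
     (\<forall>x\<in>{1..2*n}. \<exists>!c\<in>M. x = fst c \<or> x = snd c)"

definition crosses :: "chord \<Rightarrow> chord \<Rightarrow> bool" where
  "crosses c d \<longleftrightarrow>
     (fst c < fst d \<and> fst d < snd c \<and> snd c < snd d) \<or>
     (fst d < fst c \<and> fst c < snd d \<and> snd d < snd c)"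

definition conn_rel :: "chord set \<Rightarrow> (chord \<times> chord) set" where
  "conn_rel M = (Id_on M \<union> {(c,d). c \<in> M \<and> d \<in> M \<and> crosses c d})\<^sup>*"

definition components :: "chord set \<Rightarrow> chord set set" where
  "components M = M // conn_rel M"

definition connected_diagram :: "chord set \<Rightarrow> bool" where
  "connected_diagram M \<longleftrightarrow> M \<noteq> {} \<and> (\<forall>c\<in>M. \<forall>d\<in>M. (c,d) \<in> conn_rel M)"

definition indecomposable :: "nat \<Rightarrow> chord set \<Rightarrow> bool" where
  "indecomposable n M \<longleftrightarrow>
     \<not> (\<exists>k. 0 < k \<and> k < n \<and> (\<exists>S\<subseteq>M. {1..2*k} = (\<Union>(a,b)\<in>S. {a,b})))"

definition connected_diagrams :: "nat \<Rightarrow> chord set set" where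
  "connected_diagrams n = {M. chord_diagram n M \<and> connected_diagram M}"

definition indec_two_comp_diagrams :: "nat \<Rightarrow> chord set set" where
  "indec_two_comp_diagrams n =
     {M. chord_diagram n M \<and> indecomposable n M \<and> card (components M) = 2}"

definition C_gf :: "int fps" where
  "C_gf = Abs_fps (\<lambda>n. int (card (connected_diagrams n)))"

definition I2_gf :: "int fps" where
  "I2_gf = Abs_fps (\<lambda>n. int (card (indec_two_comp_diagrams n)))"

end

theory Submission
  imports Defs
begin


definition pts :: "chord set \<Rightarrow> nat set" where
  "pts M = (\<Union>c\<in>M. {fst c, snd c})"

definition disj :: "chord set \<Rightarrow> bool" where
  "disj M \<longleftrightarrow> (\<forall>c\<in>M. \<forall>d\<in>M. c \<noteq> d \<longrightarrow> {fst c, snd c} \<inter> {fst d, snd d} = {})"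

definition ord_ch :: "chord set \<Rightarrow> bool" where
  "ord_ch M \<longleftrightarrow> (\<forall>c\<in>M. fst c < snd c)"

definition sep :: "chord set \<Rightarrow> chord set \<Rightarrow> bool" where
  "sep M X \<longleftrightarrow> (\<forall>x\<in>X. \<forall>y\<in>M - X. \<not> crosses x y)"

definition conn :: "chord set \<Rightarrow> bool" where
  "conn A \<longleftrightarrow> (\<forall>c\<in>A. \<forall>d\<in>A. (c,d) \<in> conn_rel A)"

definition smono :: "nat set \<Rightarrow> (nat \<Rightarrow> nat) \<Rightarrow> bool" where
  "smono A f \<longleftrightarrow> (\<forall>x\<in>A. \<forall>y\<in>A. x < y \<longrightarrow> f x < f y)"

definition rel1 :: "(nat \<Rightarrow> nat) \<Rightarrow> chord \<Rightarrow> chord" where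
  "rel1 f c = (min (f (fst c)) (f (snd c)), max (f (fst c)) (f (snd c)))"

definition relab :: "(nat \<Rightarrow> nat) \<Rightarrow> chord set \<Rightarrow> chord set" where
  "relab f M = rel1 f ` M"

definition cat :: "chord set \<Rightarrow> nat \<Rightarrow> chord" where
  "cat M x = (THE c. c \<in> M \<and> (x = fst c \<or> x = snd c))"

lemma pts_Un[simp]: "pts (A \<union> B) = pts A \<union> pts B" by (auto simp: pts_def)
lemma pts_insert[simp]: "pts (insert c A) = {fst c, snd c} \<union> pts A" by (auto simp: pts_def)
lemma pts_empty[simp]: "pts {} = {}" by (auto simp: pts_def)
lemma pts_mono: "A \<subseteq> B \<Longrightarrow> pts A \<subseteq> pts B" by (auto simp: pts_def)
lemma pts_I1: "c \<in> A \<Longrightarrow> fst c \<in> pts A" by (auto simp: pts_def)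
lemma pts_I2: "c \<in> A \<Longrightarrow> snd c \<in> pts A" by (auto simp: pts_def)
lemma pts_E: "x \<in> pts A \<Longrightarrow> (\<And>c. c \<in> A \<Longrightarrow> x = fst c \<or> x = snd c \<Longrightarrow> P) \<Longrightarrow> P"
  by (auto simp: pts_def)

lemma crosses_sym: "crosses c d = crosses d c"
  by (auto simp: crosses_def)

lemma crosses_irrefl: "\<not> crosses c c"
  by (auto simp: crosses_def)

lemma conn_rel_sym: assumes "(c,d) \<in> conn_rel M" shows "(d,c) \<in> conn_rel M"
proof -
  let ?E = "Id_on M \<union> {(c,d). c \<in> M \<and> d \<in> M \<and> crosses c d}"
  have "sym ?E" by (auto simp: sym_def crosses_sym)
  hence "sym (?E\<^sup>*)" by (rule sym_rtrancl)
  thus ?thesis using assms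
    unfolding conn_rel_def by (meson symD)
qed

lemma conn_rel_trans: "(c,d) \<in> conn_rel M \<Longrightarrow> (d,e) \<in> conn_rel M \<Longrightarrow> (c,e) \<in> conn_rel M"
  unfolding conn_rel_def by (rule rtrancl_trans)

lemma conn_rel_refl[simp]: "(c,c) \<in> conn_rel M"
  unfolding conn_rel_def by simp

lemma conn_rel_edge: "c \<in> M \<Longrightarrow> d \<in> M \<Longrightarrow> crosses c d \<Longrightarrow> (c,d) \<in> conn_rel M"
  unfolding conn_rel_def by (rule r_into_rtrancl) auto

lemma conn_rel_mono: "A \<subseteq> B \<Longrightarrow> (c,d) \<in> conn_rel A \<Longrightarrow> (c,d) \<in> conn_rel B"
  unfolding conn_rel_def
  by (erule rtrancl_mono[THEN subsetD, rotated]) auto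

lemma conn_rel_in: "(c,d) \<in> conn_rel M \<Longrightarrow> c \<in> M \<Longrightarrow> d \<in> M"
  unfolding conn_rel_def by (induction rule: rtrancl_induct) auto

lemma sep_closure:
  assumes "sep M X" "X \<subseteq> M" "(c,d) \<in> conn_rel M" "c \<in> X"
  shows "d \<in> X \<and> (c,d) \<in> conn_rel X"
  using assms(3)
  unfolding conn_rel_def
proof (induction rule: rtrancl_induct)
  case base then show ?case using assms(4) by simp
next
  case (step y z)
  then have yX: "y \<in> X" and yz: "(c,y) \<in> (Id_on X \<union> {(c, d). c \<in> X \<and> d \<in> X \<and> crosses c d})\<^sup>*" by auto
  show ?case
  proof (cases "y = z")
    case True then show ?thesis using step by auto
  next
    case False
    then have "z \<in> M" "crosses y z" using step by auto
    then have "z \<in> X" using assms(1) yX unfolding sep_def by blast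
    then have "(y,z) \<in> Id_on X \<union> {(c, d). c \<in> X \<and> d \<in> X \<and> crosses c d}"
      using yX \<open>crosses y z\<close> by blast
    then show ?thesis using yz \<open>z \<in> X\<close> by (meson rtrancl.rtrancl_into_rtrancl)
  qed
qed

lemma sep_compl: "sep M X \<Longrightarrow> sep M (M - X)"
  unfolding sep_def by (auto simp: crosses_sym)

definition cls :: "chord set \<Rightarrow> chord \<Rightarrow> chord set" where
  "cls M c = conn_rel M `` {c}"

lemma cls_self: "c \<in> cls M c" by (simp add: cls_def)

lemma cls_sub: "c \<in> M \<Longrightarrow> cls M c \<subseteq> M"
  unfolding cls_def using conn_rel_in by blast

lemma cls_sep: assumes "c \<in> M" shows "sep M (cls M c)"
  unfolding sep_def
proof (intro ballI notI)
  fix x y assume x: "x \<in> cls M c" and y: "y \<in> M - cls M c" and xy: "crosses x y"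
  have cx: "(c,x) \<in> conn_rel M" using x by (simp add: cls_def)
  then have "x \<in> M" using conn_rel_in assms by blast
  then have "(c,y) \<in> conn_rel M" using cx y xy conn_rel_edge conn_rel_trans by blast
  then show False using y by (simp add: cls_def)
qed

lemma cls_conn: assumes "c \<in> M" shows "conn (cls M c)"
  unfolding conn_def
proof (intro ballI)
  fix x y assume "x \<in> cls M c" "y \<in> cls M c"
  then have "(x,y) \<in> conn_rel M" unfolding cls_def
    by (auto intro: conn_rel_trans conn_rel_sym)
  then show "(x,y) \<in> conn_rel (cls M c)"
    using sep_closure[OF cls_sep[OF assms] cls_sub[OF assms]] \<open>x \<in> cls M c\<close> by blast
qed

lemma cls_eq: "(c,d) \<in> conn_rel M \<Longrightarrow> cls M c = cls M d"
  unfolding cls_def by (auto intro: conn_rel_trans conn_rel_sym)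

lemma cls_of_conn:
  assumes "conn A" "sep M A" "A \<subseteq> M" "x \<in> A"
  shows "cls M x = A"
proof
  show "cls M x \<subseteq> A" unfolding cls_def using sep_closure[OF assms(2,3) _ assms(4)] by blast
  show "A \<subseteq> cls M x" unfolding cls_def using assms(1,4) conn_rel_mono[OF assms(3)]
    unfolding conn_def by blast
qed

lemma components_cls: "components M = cls M ` M"
  unfolding components_def quotient_def cls_def by blast

lemma comps_two:
  assumes "M = A \<union> B" "A \<inter> B = {}" "A \<noteq> {}" "B \<noteq> {}" "conn A" "conn B" "sep M A"
  shows "components M = {A, B}" "card (components M) = 2"
proof -
  have "M - A = B" using assms(1,2) by blast
  then have sB: "sep M B" using sep_compl[OF assms(7)] by simp
  have "cls M x = A" if "x \<in> A" for x using cls_of_conn[OF assms(5,7)] assms(1) that by blast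
  moreover have "cls M x = B" if "x \<in> B" for x using cls_of_conn[OF assms(6) sB] assms(1) that by blast
  ultimately have "cls M ` M = {A, B}" using assms(1,3,4) by (auto simp: image_Un)
  then show c: "components M = {A, B}" unfolding components_cls .
  have "A \<noteq> B" using assms(2,3) by auto
  then show "card (components M) = 2" using c by simp
qed

lemma conn_star:
  assumes "z \<in> A" "\<forall>x\<in>A. (x,z) \<in> conn_rel A"
  shows "conn A"
  unfolding conn_def using assms by (meson conn_rel_sym conn_rel_trans)

lemma conn_union:
  assumes "conn A" "conn B" "a \<in> A" "b \<in> B" "crosses a b"
  shows "conn (A \<union> B)"
proof (rule conn_star[of a])
  show "a \<in> A \<union> B" using assms by simp
  have ab: "(b,a) \<in> conn_rel (A \<union> B)" using assms by (simp add: conn_rel_edge crosses_sym)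
  show "\<forall>x\<in>A \<union> B. (x, a) \<in> conn_rel (A \<union> B)"
  proof
    fix x assume "x \<in> A \<union> B"
    then show "(x, a) \<in> conn_rel (A \<union> B)"
    proof
      assume "x \<in> A" then show ?thesis using assms(1,3) conn_rel_mono[of A "A \<union> B"] unfolding conn_def by blast
    next
      assume "x \<in> B" then have "(x,b) \<in> conn_rel (A \<union> B)"
        using assms(2,4) conn_rel_mono[of B "A \<union> B"] unfolding conn_def by blast
      then show ?thesis using ab conn_rel_trans by blast
    qed
  qed
qed



definition nocross :: "chord set \<Rightarrow> chord set \<Rightarrow> bool" where
  "nocross A B \<longleftrightarrow> (\<forall>x\<in>A. \<forall>y\<in>B. \<not> crosses x y)"

lemma sep_nocross: "sep M X \<longleftrightarrow> nocross X (M - X)"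
  by (simp add: sep_def nocross_def)

lemma nocross_sym: "nocross A B = nocross B A"
  by (auto simp: nocross_def crosses_sym)

lemma cd_iff: "chord_diagram n M \<longleftrightarrow> ord_ch M \<and> disj M \<and> pts M = {1..2*n}"
proof
  assume cd: "chord_diagram n M"
  have r: "\<forall>c\<in>M. fst c < snd c \<and> fst c \<in> {1..2*n} \<and> snd c \<in> {1..2*n}"
    using cd unfolding chord_diagram_def by auto
  have u: "\<forall>x\<in>{1..2*n}. \<exists>!c\<in>M. x = fst c \<or> x = snd c"
    using cd unfolding chord_diagram_def by auto
  have "ord_ch M" using r by (simp add: ord_ch_def)
  moreover have "disj M" unfolding disj_def
  proof (intro ballI impI)
    fix c d assume c: "c \<in> M" and d: "d \<in> M" and ne: "c \<noteq> d"
    show "{fst c, snd c} \<inter> {fst d, snd d} = {}"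
    proof (rule ccontr)
      assume "{fst c, snd c} \<inter> {fst d, snd d} \<noteq> {}"
      then obtain x where x: "x \<in> {fst c, snd c}" "x \<in> {fst d, snd d}" by blast
      then have "x \<in> {1..2*n}" using r c by auto
      then have "\<exists>!c\<in>M. x = fst c \<or> x = snd c" using u by blast
      then show False using x c d ne by blast
    qed
  qed
  moreover have "pts M = {1..2*n}"
  proof
    show "pts M \<subseteq> {1..2*n}" using r by (auto simp: pts_def)
    show "{1..2*n} \<subseteq> pts M"
    proof
      fix x assume "x \<in> {1..2*n}"
      then obtain c where "c \<in> M" "x = fst c \<or> x = snd c" using u by blast
      then show "x \<in> pts M" by (auto simp: pts_def)
    qed
  qed
  ultimately show "ord_ch M \<and> disj M \<and> pts M = {1..2*n}" by blast
next
  assume a: "ord_ch M \<and> disj M \<and> pts M = {1..2*n}"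
  have "\<forall>(a,b)\<in>M. a < b \<and> a \<in> {1..2*n} \<and> b \<in> {1..2*n}"
  proof
    fix c assume "c \<in> M"
    then have "fst c < snd c" "fst c \<in> pts M" "snd c \<in> pts M" using a by (auto simp: ord_ch_def pts_def)
    then show "case c of (a,b) \<Rightarrow> a < b \<and> a \<in> {1..2*n} \<and> b \<in> {1..2*n}" using a by (cases c) auto
  qed
  moreover have "\<forall>x\<in>{1..2*n}. \<exists>!c\<in>M. x = fst c \<or> x = snd c"
  proof
    fix x assume "x \<in> {1..2*n}"
    then have "x \<in> pts M" using a by simp
    then obtain c where c: "c \<in> M" "x = fst c \<or> x = snd c" by (auto simp: pts_def)
    moreover have "d = c" if "d \<in> M" "x = fst d \<or> x = snd d" for d
      using a c that unfolding disj_def by blast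
    ultimately show "\<exists>!c\<in>M. x = fst c \<or> x = snd c" by blast
  qed
  ultimately show "chord_diagram n M" unfolding chord_diagram_def by blast
qed

lemma disjD: "disj M \<Longrightarrow> c \<in> M \<Longrightarrow> d \<in> M \<Longrightarrow> x \<in> {fst c, snd c} \<Longrightarrow> x \<in> {fst d, snd d} \<Longrightarrow> c = d"
  unfolding disj_def by blast

lemma cat_eq: assumes "disj M" "c \<in> M" "x = fst c \<or> x = snd c" shows "cat M x = c"
  unfolding cat_def
proof (rule the_equality)
  show "c \<in> M \<and> (x = fst c \<or> x = snd c)" using assms by blast
  fix d assume "d \<in> M \<and> (x = fst d \<or> x = snd d)"
  then show "d = c" using disjD[OF assms(1)] assms(2,3) by blast
qed

lemma cat_in: assumes "disj M" "x \<in> pts M" shows "cat M x \<in> M" "x = fst (cat M x) \<or> x = snd (cat M x)"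
proof -
  obtain c where c: "c \<in> M" "x = fst c \<or> x = snd c" using assms(2) by (auto simp: pts_def)
  then have "cat M x = c" using cat_eq[OF assms(1)] by blast
  then show "cat M x \<in> M" "x = fst (cat M x) \<or> x = snd (cat M x)" using c by auto
qed

lemma pts_disj_notin1: assumes "disj M" "c \<in> M" "A \<subseteq> M" "c \<notin> A" "x \<in> {fst c, snd c}"
  shows "x \<notin> pts A"
proof
  assume "x \<in> pts A"
  then obtain d where "d \<in> A" "x = fst d \<or> x = snd d" by (rule pts_E)
  then show False using disjD[OF assms(1) assms(2), of d x] assms by blast
qed

lemma pts_disj_notin: "disj M \<Longrightarrow> c \<in> M \<Longrightarrow> A \<subseteq> M \<Longrightarrow> c \<notin> A \<Longrightarrow> fst c \<notin> pts A \<and> snd c \<notin> pts A"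
  using pts_disj_notin1 by blast

lemma pts_disj_Int: assumes "disj M" "A \<subseteq> M" "B \<subseteq> M" "A \<inter> B = {}" shows "pts A \<inter> pts B = {}"
proof (rule ccontr)
  assume "pts A \<inter> pts B \<noteq> {}"
  then obtain x where xA: "x \<in> pts A" and "x \<in> pts B" by blast
  from xA obtain c where c: "c \<in> A" "x = fst c \<or> x = snd c" by (rule pts_E)
  then have "c \<notin> B" using assms(4) by blast
  then show False using pts_disj_notin1[OF assms(1) _ assms(3), of c x] c assms(2) \<open>x \<in> pts B\<close> by blast
qed

lemma cross_char:
  assumes "a < b" "p < q" "p \<noteq> a" "p \<noteq> b" "q \<noteq> a" "q \<noteq> b"
  shows "crosses (a,b) (p,q) \<longleftrightarrow> ((a < p \<and> p < b) \<noteq> (a < q \<and> q < b))"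
  using assms unfolding crosses_def by auto

lemma L1:
  assumes K: "conn K" "ord_ch K"
    and st: "s < t" "\<forall>k\<in>K. fst k \<noteq> s \<and> fst k \<noteq> t \<and> snd k \<noteq> s \<and> snd k \<noteq> t"
    and p: "p \<in> pts K" "s < p" "p < t"
    and q: "q \<in> pts K" "q < s \<or> t < q"
  shows "\<exists>k\<in>K. crosses k (s,t)"
proof (rule ccontr)
  assume nc: "\<not> (\<exists>k\<in>K. crosses k (s,t))"
  have both: "(s < fst k \<and> fst k < t) = (s < snd k \<and> snd k < t)" if "k \<in> K" for k
  proof -
    have "fst k < snd k" using K(2) that by (simp add: ord_ch_def)
    moreover have "\<not> crosses k (s,t)" using nc that by blast
    ultimately show ?thesis using st(2) that unfolding crosses_def by auto
  qed
  define X where "X = {k\<in>K. s < fst k \<and> fst k < t}"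
  have sepX: "sep K X" unfolding sep_def
  proof (intro ballI notI)
    fix x y assume x: "x \<in> X" and y: "y \<in> K - X" and xy: "crosses x y"
    have xK: "x \<in> K" "s < fst x" "fst x < t" using x unfolding X_def by auto
    then have "snd x < t" using both[of x] by blast
    have yK: "y \<in> K" "\<not> (s < fst y \<and> fst y < t)" using y unfolding X_def by auto
    then have "\<not> (s < snd y \<and> snd y < t)" using both[of y] by blast
    note xK yK this \<open>snd x < t\<close>
    moreover
    ultimately show False using xy unfolding crosses_def by linarith
  qed
  obtain kp where kp: "kp \<in> K" "p = fst kp \<or> p = snd kp" using p(1) by (auto simp: pts_def)
  obtain kq where kq: "kq \<in> K" "q = fst kq \<or> q = snd kq" using q(1) by (auto simp: pts_def)
  have "kp \<in> X" using kp both[of kp] p unfolding X_def by auto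
  moreover have "kq \<notin> X" using kq both[of kq] q unfolding X_def by auto
  moreover have "(kp, kq) \<in> conn_rel K" using K(1) kp kq unfolding conn_def by blast
  ultimately show False using sep_closure[OF sepX _ _ \<open>kp \<in> X\<close>] unfolding X_def by blast
qed

lemma smono_iff: "smono A f \<Longrightarrow> x \<in> A \<Longrightarrow> y \<in> A \<Longrightarrow> (f x < f y) = (x < y)"
  unfolding smono_def by (metis not_less_iff_gr_or_eq order_less_imp_not_less)

lemma smono_sub: "smono A f \<Longrightarrow> B \<subseteq> A \<Longrightarrow> smono B f"
  unfolding smono_def by blast

lemma rel1_mono: "smono A f \<Longrightarrow> fst c \<in> A \<Longrightarrow> snd c \<in> A \<Longrightarrow> fst c < snd c \<Longrightarrow> rel1 f c = (f (fst c), f (snd c))"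
  unfolding rel1_def smono_def by auto

lemma cross_relab:
  assumes "smono A f" "fst c \<in> A" "snd c \<in> A" "fst d \<in> A" "snd d \<in> A" "fst c < snd c" "fst d < snd d"
  shows "crosses (rel1 f c) (rel1 f d) = crosses c d"
proof -
  have "rel1 f c = (f (fst c), f (snd c))" "rel1 f d = (f (fst d), f (snd d))"
    using rel1_mono assms by blast+
  then show ?thesis unfolding crosses_def using smono_iff[OF assms(1)] assms(2-5) by auto
qed

lemma rel1_pts: "{fst (rel1 f c), snd (rel1 f c)} = f ` {fst c, snd c}"
  unfolding rel1_def by (auto simp: min_def max_def)

lemma pts_relab: "pts (relab f A) = f ` pts A"
proof -
  have "pts (relab f A) = (\<Union>c\<in>A. {fst (rel1 f c), snd (rel1 f c)})"
    unfolding pts_def relab_def by simp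
  also have "\<dots> = (\<Union>c\<in>A. f ` {fst c, snd c})" by (simp only: rel1_pts)
  also have "\<dots> = f ` pts A" unfolding pts_def by (simp only: image_UN)
  finally show ?thesis .
qed

lemma relab_Un[simp]: "relab f (A \<union> B) = relab f A \<union> relab f B"
  unfolding relab_def by auto

lemma relab_insert[simp]: "relab f (insert c A) = insert (rel1 f c) (relab f A)"
  unfolding relab_def by auto

lemma relab_mem: "c \<in> A \<Longrightarrow> rel1 f c \<in> relab f A"
  unfolding relab_def by auto

lemma conn_relab:
  assumes "smono (pts A) f" "ord_ch A" "conn A"
  shows "conn (relab f A)"
proof -
  have *: "(rel1 f x, rel1 f y) \<in> conn_rel (relab f A)" if "(x,y) \<in> conn_rel A" for x y
    using that unfolding conn_rel_def
  proof (induction rule: rtrancl_induct)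
    case base then show ?case by simp
  next
    case (step y z)
    show ?case
    proof (cases "y = z")
      case True then show ?thesis using step by simp
    next
      case False
      then have yz: "y \<in> A" "z \<in> A" "crosses y z" using step by auto
      then have "crosses (rel1 f y) (rel1 f z)"
        using cross_relab[OF assms(1)] assms(2) by (simp add: pts_I1 pts_I2 ord_ch_def)
      then have "(rel1 f y, rel1 f z) \<in> conn_rel (relab f A)"
        using yz by (simp add: conn_rel_edge relab_mem)
      then show ?thesis using step(3) conn_rel_trans unfolding conn_rel_def by blast
    qed
  qed
  show ?thesis unfolding conn_def
  proof (intro ballI)
    fix x y assume "x \<in> relab f A" "y \<in> relab f A"
    then obtain x0 y0 where "x0 \<in> A" "y0 \<in> A" "x = rel1 f x0" "y = rel1 f y0" unfolding relab_def by blast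
    then show "(x,y) \<in> conn_rel (relab f A)" using * assms(3) unfolding conn_def by blast
  qed
qed

lemma nocross_relab:
  assumes "smono (pts A \<union> pts B) f" "ord_ch A" "ord_ch B" "nocross A B"
  shows "nocross (relab f A) (relab f B)"
  unfolding nocross_def relab_def
proof (intro ballI)
  fix x y assume "x \<in> rel1 f ` A" "y \<in> rel1 f ` B"
  then obtain x0 y0 where "x0 \<in> A" "y0 \<in> B" "x = rel1 f x0" "y = rel1 f y0" by blast
  then show "\<not> crosses x y"
    using cross_relab[OF assms(1)] assms(2-4) by (simp add: pts_I1 pts_I2 ord_ch_def nocross_def)
qed

lemma ord_relab: assumes "inj_on f (pts A)" "ord_ch A" shows "ord_ch (relab f A)"
  unfolding ord_ch_def relab_def
proof
  fix x assume "x \<in> rel1 f ` A"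
  then obtain c where c: "c \<in> A" "x = rel1 f c" by blast
  then have "fst c \<noteq> snd c" using assms(2) by (auto simp: ord_ch_def)
  moreover have "fst c \<in> pts A" "snd c \<in> pts A" using c by (auto simp: pts_I1 pts_I2)
  ultimately have "f (fst c) \<noteq> f (snd c)" using assms(1) by (meson inj_onD)
  then show "fst x < snd x" using c by (auto simp: rel1_def min_def max_def)
qed

lemma rel1_comp: "rel1 g (rel1 f c) = rel1 (g \<circ> f) c"
  unfolding rel1_def by (auto simp: min_def max_def)

lemma relab_comp_id:
  assumes "\<forall>x\<in>pts M. g (f x) = x" "ord_ch M"
  shows "relab g (relab f M) = M"
proof -
  have "rel1 g (rel1 f c) = c" if "c \<in> M" for c
  proof -
    have "g (f (fst c)) = fst c" "g (f (snd c)) = snd c" using assms(1) that pts_I1 pts_I2 by blast+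
    moreover have "fst c < snd c" using assms(2) that by (simp add: ord_ch_def)
    ultimately show ?thesis unfolding rel1_comp by (simp add: rel1_def)
  qed
  then show ?thesis unfolding relab_def image_image by simp
qed

lemma disj_relab:
  assumes "inj_on f (pts A)" "disj A"
  shows "disj (relab f A)"
  unfolding disj_def relab_def
proof (intro ballI impI)
  fix x y assume x: "x \<in> rel1 f ` A" and y: "y \<in> rel1 f ` A" and ne: "x \<noteq> y"
  then obtain x0 y0 where x0: "x0 \<in> A" "x = rel1 f x0" and y0: "y0 \<in> A" "y = rel1 f y0" by blast
  then have "x0 \<noteq> y0" using ne by blast
  then have d: "{fst x0, snd x0} \<inter> {fst y0, snd y0} = {}" using assms(2) x0 y0 unfolding disj_def by blast
  have "{fst x, snd x} = f ` {fst x0, snd x0}" "{fst y, snd y} = f ` {fst y0, snd y0}"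
    using x0 y0 rel1_pts by blast+
  moreover have "{fst x0, snd x0} \<subseteq> pts A" "{fst y0, snd y0} \<subseteq> pts A"
    using x0(1) y0(1) pts_I1 pts_I2 by blast+
  moreover have "f ` {fst x0, snd x0} \<inter> f ` {fst y0, snd y0} = {}"
    using d inj_on_image_Int[OF assms(1) calculation(3,4)] by simp
  ultimately show "{fst x, snd x} \<inter> {fst y, snd y} = {}" by simp
qed

lemma cd_relab:
  assumes "chord_diagram n M" "inj_on f {1..2*n}" "f ` {1..2*n} = {1..2*n}"
  shows "chord_diagram n (relab f M)"
proof -
  have m: "ord_ch M" "disj M" "pts M = {1..2*n}" using assms(1) cd_iff by blast+
  show ?thesis unfolding cd_iff
    using ord_relab disj_relab pts_relab m assms(2,3) by metis
qed



definition tau :: "nat \<Rightarrow> nat \<Rightarrow> nat" where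
  "tau m x = (if x < m then x + 1 else if x = m then 1 else x)"

definition sig :: "nat \<Rightarrow> nat \<Rightarrow> nat" where
  "sig u x = (if x = 1 then u else if x \<le> u then x - 1 else x)"

lemma tau_sig: "1 \<le> x \<Longrightarrow> 1 \<le> u \<Longrightarrow> tau u (sig u x) = x"
  unfolding tau_def sig_def by auto

lemma sig_tau: "1 \<le> x \<Longrightarrow> 1 \<le> m \<Longrightarrow> sig m (tau m x) = x"
  unfolding tau_def sig_def by auto

lemma sig_range: "x \<in> {1..N} \<Longrightarrow> 2 \<le> u \<Longrightarrow> u \<le> N \<Longrightarrow> sig u x \<in> {1..N}"
  unfolding sig_def by auto

lemma tau_range: "x \<in> {1..N} \<Longrightarrow> 1 \<le> m \<Longrightarrow> m \<le> N \<Longrightarrow> tau m x \<in> {1..N}"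
  unfolding tau_def by auto

lemma bij_helper:
  assumes "\<forall>x\<in>A. g (f x) = x" "\<forall>x\<in>A. f (g x) = x" "f ` A \<subseteq> A" "g ` A \<subseteq> A"
  shows "inj_on f A" "f ` A = A"
proof -
  show "inj_on f A" using assms(1) by (metis inj_onI)
  show "f ` A = A"
  proof
    show "f ` A \<subseteq> A" by fact
    show "A \<subseteq> f ` A"
    proof
      fix x assume "x \<in> A" then have "x = f (g x)" "g x \<in> A" using assms by auto
      then show "x \<in> f ` A" by blast
    qed
  qed
qed

lemma sig_bij: assumes "2 \<le> u" "u \<le> 2*n"
  shows "inj_on (sig u) {1..2*n}" "sig u ` {1..2*n} = {1..2*n}"
proof -
  have a: "\<forall>x\<in>{1..2*n}. tau u (sig u x) = x" "\<forall>x\<in>{1..2*n}. sig u (tau u x) = x"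
    using tau_sig sig_tau assms by auto
  have b: "sig u ` {1..2*n} \<subseteq> {1..2*n}" "tau u ` {1..2*n} \<subseteq> {1..2*n}"
    using sig_range[of _ "2*n" u] tau_range[of _ "2*n" u] assms by auto
  show "inj_on (sig u) {1..2*n}" "sig u ` {1..2*n} = {1..2*n}" using bij_helper[OF a b] by auto
qed

lemma tau_bij: assumes "1 \<le> m" "m \<le> 2*n"
  shows "inj_on (tau m) {1..2*n}" "tau m ` {1..2*n} = {1..2*n}"
proof -
  have a: "\<forall>x\<in>{1..2*n}. sig m (tau m x) = x" "\<forall>x\<in>{1..2*n}. tau m (sig m x) = x"
    using tau_sig sig_tau assms by auto
  have b: "tau m ` {1..2*n} \<subseteq> {1..2*n}" "sig m ` {1..2*n} \<subseteq> {1..2*n}"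
    using sig_range[of _ "2*n" m] tau_range[of _ "2*n" m] assms unfolding sig_def by auto
  show "inj_on (tau m) {1..2*n}" "tau m ` {1..2*n} = {1..2*n}" using bij_helper[OF a b] by auto
qed

lemma sig_smono1: "smono {x. 2 \<le> x} (sig u)"
  unfolding smono_def sig_def by auto

lemma sig_smono2: "smono ({1} \<union> {x. u < x}) (sig u)"
  unfolding smono_def sig_def by auto

lemma tau_smono1: "smono ({x. 1 \<le> x} - {m}) (tau m)"
  unfolding smono_def tau_def by auto

lemma tau_smono2: "1 \<le> m \<Longrightarrow> smono {x. m \<le> x} (tau m)"
  unfolding smono_def tau_def by auto

lemma relab_fix: assumes "\<forall>x\<in>pts M. f x = x" "ord_ch M" shows "relab f M = M"
proof -
  have "rel1 f c = c" if "c \<in> M" for c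
  proof -
    have "f (fst c) = fst c" "f (snd c) = snd c" using assms(1) that pts_I1 pts_I2 by blast+
    moreover have "fst c < snd c" using assms(2) that by (simp add: ord_ch_def)
    ultimately show ?thesis by (simp add: rel1_def)
  qed
  then show ?thesis unfolding relab_def by simp
qed

lemma pts_split: "(\<Union>(a,b)\<in>S. {a,b}) = pts S"
  unfolding pts_def by (simp add: split_beta)

lemma conn_in_closed:
  assumes "conn A" "A \<subseteq> M" "sep M X" "X \<subseteq> M" "a \<in> A" "a \<in> X"
  shows "A \<subseteq> X"
proof
  fix y assume "y \<in> A"
  then have "(a,y) \<in> conn_rel M" using assms(1,2,5) conn_rel_mono unfolding conn_def by blast
  then show "y \<in> X" using sep_closure[OF assms(3,4)] assms(6) by blast
qed

lemma reach_root:
  assumes "(c, r) \<in> conn_rel D" "c \<noteq> r"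
  shows "\<exists>d\<in>D - {r}. (c,d) \<in> conn_rel (D - {r}) \<and> crosses d r"
  using assms unfolding conn_rel_def
proof (induction rule: converse_rtrancl_induct)
  case base then show ?case by simp
next
  case (step c c1)
  show ?case
  proof (cases "c = c1")
    case True then show ?thesis using step by simp
  next
    case False
    then have cc: "c \<in> D" "c1 \<in> D" "crosses c c1" using step(1) by auto
    show ?thesis
    proof (cases "c1 = r")
      case True then show ?thesis using cc step(4) by (auto simp: conn_rel_def[symmetric])
    next
      case False
      then obtain d where d: "d \<in> D - {r}" "(c1,d) \<in> conn_rel (D - {r})" "crosses d r"
        using step(3) unfolding conn_rel_def by blast
      have "(c,c1) \<in> conn_rel (D - {r})" using cc False step(4) by (simp add: conn_rel_edge)
      then show ?thesis using d conn_rel_trans unfolding conn_rel_def by blast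
    qed
  qed
qed



definition mI :: "chord set \<Rightarrow> nat" where
  "mI I = Min (pts (I - cls I (cat I 1)))"

definition uD :: "chord set \<Rightarrow> nat" where
  "uD D = Max {x \<in> pts (cls (D - {cat D 1}) (cat D 2)). x < snd (cat D 1)}"

definition psi :: "chord set \<Rightarrow> chord set" where
  "psi D = relab (sig (uD D)) D"

definition phi :: "chord set \<Rightarrow> chord set" where
  "phi I = relab (tau (mI I)) I"

lemma above_u:
  assumes K: "conn K" "ord_ch K" "K \<subseteq> D'" "sep D' K"
    and D: "disj D" "D' \<subseteq> D" "ord_ch D"
    and u: "u \<in> pts K" "2 \<in> pts K"
    and z: "z \<in> D' - K" "u < snd z" "2 \<le> fst z"
  shows "u < fst z"
proof (rule ccontr)
  assume "\<not> u < fst z"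
  have zD: "z \<in> D" using z D by blast
  have nz: "fst z \<notin> pts K" "snd z \<notin> pts K" using pts_disj_notin[OF D(1) zD] K(3) D(2) z(1) by blast+
  have "fst z \<noteq> u" "fst z \<noteq> 2" using nz u by auto
  then have lt: "fst z < u" "2 < fst z" using \<open>\<not> u < fst z\<close> z(3) by auto
  have "fst z < snd z" using D(3) zD by (simp add: ord_ch_def)
  have "\<forall>k\<in>K. fst k \<noteq> fst z \<and> fst k \<noteq> snd z \<and> snd k \<noteq> fst z \<and> snd k \<noteq> snd z"
    using nz pts_I1 pts_I2 by metis
  then obtain k where "k \<in> K" "crosses k (fst z, snd z)"
    using L1[OF K(1,2) \<open>fst z < snd z\<close> _ u(1) lt(1) z(2) u(2)] lt(2) by blast
  then show False using K(4) z(1) unfolding sep_def by simp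
qed

lemma psi_main:
  assumes n2: "2 \<le> n" and cd: "chord_diagram n D" and cn: "connected_diagram D"
  shows "psi D \<in> indec_two_comp_diagrams n \<and> mI (psi D) = uD D \<and> 2 \<le> uD D"
proof -
  have D: "ord_ch D" "disj D" "pts D = {1..2*n}" using cd cd_iff by blast+
  have finD: "finite (pts D)" using D(3) by simp
  have rng: "fst z \<in> {1..2*n} \<and> snd z \<in> {1..2*n}" if "z \<in> D" for z
  proof -
    have "fst z \<in> pts D" "snd z \<in> pts D" using pts_I1[OF that] pts_I2[OF that] .
    then show ?thesis unfolding D(3) by simp
  qed
  define r where "r = cat D 1"
  have "1 \<in> pts D" using D(3) n2 by simp
  then have rD: "r \<in> D" and r1: "1 = fst r \<or> 1 = snd r" using cat_in[OF D(2)] r_def by blast+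
  have "fst r < snd r" using rD D(1) by (simp add: ord_ch_def)
  moreover have "fst r \<ge> 1" using rng[OF rD] by simp
  ultimately have fr: "fst r = 1" using r1 by linarith
  define b where "b = snd r"
  have rb: "r = (1, b)" using fr b_def by (simp add: prod_eq_iff)
  define D' where "D' = D - {r}"
  have D'D: "D' \<subseteq> D" unfolding D'_def by blast
  have star: "\<exists>d\<in>D'. (c,d) \<in> conn_rel D' \<and> crosses d r" if "c \<in> D'" for c
  proof -
    have "(c, r) \<in> conn_rel D" using cn that rD unfolding connected_diagram_def D'_def by blast
    then show ?thesis using reach_root that unfolding D'_def by blast
  qed
  have cross_r: "1 < fst d \<and> fst d < b \<and> b < snd d" if "d \<in> D" "crosses d r" for d
  proof -
    have "fst d \<ge> 1" using rng[OF that(1)] by simp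
    then show ?thesis using that(2) rb unfolding crosses_def by auto
  qed
  have "D' \<noteq> {}"
  proof
    assume "D' = {}"
    then have "D = {r}" using rD unfolding D'_def by blast
    then have "pts D = {1, b}" using rb by simp
    moreover have "card {1::nat, b} \<le> 2" by (cases "b = 1") auto
    ultimately have "card {1..2*n} \<le> 2" using D(3) by simp
    then show False using n2 by simp
  qed
  then obtain c0 where "c0 \<in> D'" by blast
  then obtain d0 where "d0 \<in> D'" "crosses d0 r" using star by blast
  then have b3: "3 \<le> b" using cross_r D'D by fastforce
  have "2 \<in> pts D" using D(3) n2 by simp
  define c2 where "c2 = cat D 2"
  have c2D: "c2 \<in> D" and c22: "2 = fst c2 \<or> 2 = snd c2" using cat_in[OF D(2) \<open>2 \<in> pts D\<close>] c2_def by blast+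
  have "c2 \<noteq> r" using c22 rb b3 by auto
  then have c2D': "c2 \<in> D'" using c2D unfolding D'_def by blast
  define K where "K = cls D' c2"
  have KD': "K \<subseteq> D'" using cls_sub[OF c2D'] K_def by simp
  have Kconn: "conn K" using cls_conn[OF c2D'] K_def by simp
  have Ksep: "sep D' K" using cls_sep[OF c2D'] K_def by simp
  have c2K: "c2 \<in> K" using cls_self K_def by simp
  have Kord: "ord_ch K" using D(1) KD' D'D unfolding ord_ch_def by blast
  have K2pt: "2 \<in> pts K" using c2K c22 pts_I1 pts_I2 by metis
  obtain dK where dK: "dK \<in> D'" "(c2, dK) \<in> conn_rel D'" "crosses dK r" using star c2D' by blast
  have dKK: "dK \<in> K" using dK(2) K_def cls_def by simp
  have dKc: "1 < fst dK" "fst dK < b" "b < snd dK" using cross_r dK D'D by blast+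
  define L where "L = {x \<in> pts K. x < b}"
  have finK: "finite (pts K)" using finD pts_mono KD' D'D by (meson finite_subset subset_trans)
  have "fst dK \<in> L" using dKK dKc pts_I1 L_def by blast
  then have Lne: "L \<noteq> {}" and Lfin: "finite L" using finK L_def by auto
  define u where "u = Max L"
  have uD_eq: "uD D = u" unfolding uD_def u_def L_def K_def c2_def D'_def r_def b_def by simp
  have uL: "u \<in> L" using Max_in[OF Lfin Lne] u_def by simp
  then have uK: "u \<in> pts K" and ub: "u < b" using L_def by auto
  have umax: "x \<le> u" if "x \<in> pts K" "x < b" for x using Max_ge[OF Lfin] that L_def u_def by simp
  have u2: "2 \<le> u" using umax[OF K2pt] b3 by simp
  have "u \<le> 2*n" using uK pts_mono[OF subset_trans[OF KD' D'D]] D(3) by auto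
  note ubounds = u2 this
  define S where "S = D' - K"
  have SD': "S \<subseteq> D'" unfolding S_def by blast
  have Ssep: "sep D' S" using sep_compl[OF Ksep] S_def by simp
  have K_S: "nocross K S" using Ksep S_def sep_nocross by simp
  have not1: "fst z \<noteq> 1 \<and> snd z \<noteq> 1" if "z \<in> D'" for z
  proof -
    have "z \<noteq> r" "z \<in> D" using that D'_def by auto
    then show ?thesis using disjD[OF D(2) _ rD, of z 1] rb by auto
  qed
  have ge1: "1 \<le> fst z" if "z \<in> D" for z using rng[OF that] by simp
  have Sabove: "u < fst e \<and> u < snd e" if eS: "e \<in> S" for e
  proof -
    obtain d where d: "d \<in> D'" "(e,d) \<in> conn_rel D'" "crosses d r" using star eS SD' by blast
    have "(d,e) \<in> conn_rel D'" using d(2) conn_rel_sym by blast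
    have dS: "d \<in> S" using sep_closure[OF Ssep SD' d(2) eS] by blast
    have claim: "y \<in> S \<and> u < fst y \<and> u < snd y" if "(d,y) \<in> conn_rel D'" for y
      using that unfolding conn_rel_def
    proof (induction rule: rtrancl_induct)
      case base
      have "u < snd d" using cross_r d D'D ub by fastforce
      moreover have "2 \<le> fst d" using cross_r d D'D by fastforce
      ultimately have "u < fst d" using above_u[OF Kconn Kord KD' Ksep D(2) D'D D(1) uK K2pt] dS S_def by blast
      then show ?case using dS \<open>u < snd d\<close> by simp
    next
      case (step y z)
      have yS: "y \<in> S" "u < fst y" "u < snd y" using step(3) by auto
      show ?case
      proof (cases "y = z")
        case True then show ?thesis using yS by simp
      next
        case False
        then have zD': "z \<in> D'" "crosses y z" using step(2) by auto
        have "(y,z) \<in> conn_rel D'" using zD' yS SD' conn_rel_edge by blast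
        then have zS: "z \<in> S" using sep_closure[OF Ssep SD' _ yS(1)] by blast
        have "u < snd z" using zD'(2) yS(2,3) unfolding crosses_def by auto
        moreover have "2 \<le> fst z" using not1[OF zD'(1)] ge1[of z] zD'(1) D'D by fastforce
        ultimately have "u < fst z" using above_u[OF Kconn Kord KD' Ksep D(2) D'D D(1) uK K2pt] zS S_def by blast
        then show ?thesis using zS \<open>u < snd z\<close> by simp
      qed
    qed
    show ?thesis using claim[OF \<open>(d,e) \<in> conn_rel D'\<close>] by simp
  qed
  have ptsS: "x \<in> pts S \<Longrightarrow> u < x" for x using Sabove by (auto elim: pts_E)
  have ptsK_gt: "x \<in> pts K \<Longrightarrow> u < x \<Longrightarrow> b < x" for x
  proof -
    assume x: "x \<in> pts K" "u < x"
    have "x \<noteq> b"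
    proof
      assume "x = b"
      then have "b \<in> pts K" using x by simp
      moreover have "b \<notin> pts K" using pts_disj_notin[OF D(2) rD, of K] KD' D'_def rb by auto
      ultimately show False by simp
    qed
    moreover have "\<not> x < b" using umax[OF x(1)] x(2) by auto
    ultimately show "b < x" by simp
  qed
  have ptsK2: "x \<in> pts K \<Longrightarrow> 2 \<le> x" for x
  proof -
    assume x: "x \<in> pts K"
    have "1 \<notin> pts K" using pts_disj_notin[OF D(2) rD, of K] KD' D'_def rb by auto
    moreover have "x \<in> pts D" using x pts_mono KD' D'D by blast
    ultimately show "2 \<le> x" using x D(3) by (cases "x = 1") auto
  qed
  define \<sigma> where "\<sigma> = sig u"
  define R where "R = relab \<sigma> K"
  define Q where "Q = relab \<sigma> (insert r S)"
  have Dsplit: "D = K \<union> insert r S" using KD' rD unfolding S_def D'_def by blast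
  have I_eq: "psi D = R \<union> Q" unfolding psi_def uD_eq R_def Q_def \<sigma>_def
    by (subst Dsplit) (simp only: relab_Un)
  have sr: "rel1 \<sigma> r = (u, b)" using rb ub u2 unfolding \<sigma>_def sig_def rel1_def by auto
  have smK: "smono (pts K) \<sigma>" using smono_sub[OF sig_smono1] ptsK2 \<sigma>_def by blast
  have Rconn: "conn R" using conn_relab[OF smK Kord Kconn] R_def by simp
  have Sord: "ord_ch S" using D(1) SD' D'D unfolding ord_ch_def by blast
  have rSord: "ord_ch (insert r S)" using Sord rD D(1) unfolding ord_ch_def by blast
  have rSconn: "conn (insert r S)"
  proof (rule conn_star[of r])
    show "r \<in> insert r S" by simp
    show "\<forall>x\<in>insert r S. (x, r) \<in> conn_rel (insert r S)"
    proof
      fix x assume x: "x \<in> insert r S"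
      show "(x, r) \<in> conn_rel (insert r S)"
      proof (cases "x = r")
        case True then show ?thesis by simp
      next
        case False
        then have xS: "x \<in> S" using x by simp
        obtain d where d: "d \<in> D'" "(x,d) \<in> conn_rel D'" "crosses d r" using star xS SD' by blast
        have "d \<in> S" "(x,d) \<in> conn_rel S" using sep_closure[OF Ssep SD' d(2) xS] by auto
        then have "(x,d) \<in> conn_rel (insert r S)" "(d,r) \<in> conn_rel (insert r S)"
          using conn_rel_mono[of S "insert r S" x d] conn_rel_edge[of d "insert r S" r] d(3) by auto
        then show ?thesis using conn_rel_trans by blast
      qed
    qed
  qed
  have smrS: "smono (pts (insert r S)) \<sigma>"
  proof -
    have "pts (insert r S) \<subseteq> {1} \<union> {x. u < x}" using rb ub ptsS by auto
    then show ?thesis using smono_sub[OF sig_smono2[of u]] \<sigma>_def by simp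
  qed
  have Qconn: "conn Q" using conn_relab[OF smrS rSord rSconn] Q_def \<sigma>_def by simp
  have smKS: "smono (pts K \<union> pts S) \<sigma>"
  proof -
    have "pts K \<union> pts S \<subseteq> {x. 2 \<le> x}" using ptsK2 ptsS u2 by force
    then show ?thesis using smono_sub[OF sig_smono1] \<sigma>_def by simp
  qed
  have RS: "nocross R (relab \<sigma> S)" using nocross_relab[OF smKS Kord Sord K_S] R_def by simp
  have ptsR: "pts R = \<sigma> ` pts K" using pts_relab R_def by simp
  have Rpts_out: "y < u \<or> b < y" if yR: "y \<in> pts R" for y
  proof -
    obtain x where x: "x \<in> pts K" "y = \<sigma> x" using yR ptsR by blast
    show ?thesis
    proof (cases "x \<le> u")
      case True then have "y = x - 1" using x ptsK2[OF x(1)] unfolding \<sigma>_def sig_def by auto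
      then show ?thesis using True ptsK2[OF x(1)] by arith
    next
      case False then have "y = x" "b < x" using x u2 ptsK_gt[OF x(1)] unfolding \<sigma>_def sig_def by auto
      then show ?thesis by simp
    qed
  qed
  have Rr: "\<not> crosses y (u,b)" if "y \<in> R" for y
  proof -
    have "fst y \<in> pts R" "snd y \<in> pts R" using that pts_I1 pts_I2 by blast+
    then have "fst y < u \<or> b < fst y" "snd y < u \<or> b < snd y" using Rpts_out by blast+
    then show ?thesis unfolding crosses_def by auto
  qed
  have Q_eq: "Q = insert (u,b) (relab \<sigma> S)" using Q_def sr by simp
  have RQ: "nocross R Q" using RS Rr Q_eq unfolding nocross_def by blast
  have injs: "inj_on \<sigma> {1..2*n}" "\<sigma> ` {1..2*n} = {1..2*n}" using sig_bij[OF ubounds] \<sigma>_def by auto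
  have ptsQ: "pts Q = \<sigma> ` pts (insert r S)" unfolding Q_def by (rule pts_relab)
  have "pts K \<inter> pts (insert r S) = {}"
    using pts_disj_Int[OF D(2), of K "insert r S"] KD' D'D rD unfolding S_def D'_def by blast
  moreover have "pts K \<union> pts (insert r S) \<subseteq> {1..2*n}" using D(3) Dsplit by (metis pts_Un order_refl)
  ultimately have "pts R \<inter> pts Q = {}" using ptsR ptsQ inj_on_image_Int[OF injs(1)] by (metis image_empty le_sup_iff)
  then have RQdisj: "R \<inter> Q = {}" using pts_I1 by blast
  have Rne: "R \<noteq> {}" using c2K R_def relab_mem by blast
  have Qne: "Q \<noteq> {}" using Q_eq by blast
  have sepI: "sep (psi D) R" unfolding sep_nocross using RQ I_eq unfolding nocross_def by blast
  have comps: "components (psi D) = {R, Q}" "card (components (psi D)) = 2"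
    using comps_two[OF I_eq RQdisj Rne Qne Rconn Qconn sepI] by auto
  have cdI: "chord_diagram n (psi D)" unfolding psi_def uD_eq using cd_relab[OF cd] injs \<sigma>_def by simp
  have I: "ord_ch (psi D)" "disj (psi D)" "pts (psi D) = {1..2*n}" using cdI cd_iff by blast+
  have "\<sigma> 2 = 1" unfolding \<sigma>_def sig_def using u2 by simp
  then have "1 \<in> pts R" unfolding ptsR using K2pt by (metis image_eqI)
  then obtain c1 where c1: "c1 \<in> R" "1 = fst c1 \<or> 1 = snd c1" by (rule pts_E)
  have "\<sigma> (snd dK) = snd dK" unfolding \<sigma>_def sig_def using dKc ub u2 by simp
  then have "snd dK \<in> pts R" unfolding ptsR using pts_I2[OF dKK] by (metis image_eqI)
  have indec: "indecomposable n (psi D)"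
    unfolding indecomposable_def pts_split
  proof
    assume "\<exists>k>0. k < n \<and> (\<exists>S'\<subseteq>psi D. {1..2*k} = pts S')"
    then obtain k S' where k: "0 < k" "k < n" "S' \<subseteq> psi D" "{1..2*k} = pts S'" by blast
    have out: "fst c \<notin> pts S' \<and> snd c \<notin> pts S'" if cS: "c \<in> psi D - S'" for c
      using pts_disj_notin[OF I(2), of c S'] cS k(3) by blast
    have sepS': "sep (psi D) S'" unfolding sep_def
    proof (intro ballI notI)
      fix x y assume x: "x \<in> S'" and y: "y \<in> psi D - S'" and xy: "crosses x y"
      have "snd x \<in> {1..2*k}" unfolding k(4) using x by (rule pts_I2)
      then have sx: "snd x \<le> 2*k" by simp
      have yI: "y \<in> psi D" using y by blast
      have "fst y \<in> pts (psi D)" "snd y \<in> pts (psi D)" using pts_I1[OF yI] pts_I2[OF yI] .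
      then have "1 \<le> fst y" "1 \<le> snd y" unfolding I(3) by auto
      moreover have "fst y \<notin> {1..2*k}" "snd y \<notin> {1..2*k}" unfolding k(4) using out[OF y] by auto
      ultimately have "fst y > 2*k" "snd y > 2*k" by auto
      then show False using xy sx unfolding crosses_def by auto
    qed
    have "1 \<in> {1..2*k}" using k(1) by simp
    then have "1 \<in> pts S'" unfolding k(4) .
    then obtain c1' where c1': "c1' \<in> S'" "1 = fst c1' \<or> 1 = snd c1'" by (rule pts_E)
    have "c1 \<in> psi D" using c1 I_eq by blast
    moreover have "c1' \<in> psi D" using c1' k(3) by blast
    moreover have "1 \<in> {fst c1', snd c1'}" "1 \<in> {fst c1, snd c1}" using c1 c1' by auto
    ultimately have "c1' = c1" using disjD[OF I(2)] by blast
    then have "R \<subseteq> S'" using conn_in_closed[OF Rconn _ sepS' k(3)] c1 \<open>c1' \<in> S'\<close> I_eq by blast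
    then have "snd dK \<in> pts S'" using \<open>snd dK \<in> pts R\<close> pts_mono by blast
    then have "snd dK \<le> 2*k" unfolding k(4)[symmetric] by simp
    then have "b \<in> {1..2*k}" using dKc(3) b3 by simp
    then have "b \<in> pts S'" unfolding k(4) .
    then obtain cb where cb: "cb \<in> S'" "b = fst cb \<or> b = snd cb" by (rule pts_E)
    have "(u,b) \<in> psi D" using I_eq Q_eq by blast
    moreover have "cb \<in> psi D" using cb k(3) by blast
    moreover have "b \<in> {fst cb, snd cb}" "b \<in> {fst (u,b), snd (u,b)}" using cb by auto
    ultimately have "cb = (u,b)" using disjD[OF I(2)] by blast
    then have "Q \<subseteq> S'" using conn_in_closed[OF Qconn _ sepS' k(3)] cb Q_eq I_eq by blast
    then have "psi D \<subseteq> S'" using \<open>R \<subseteq> S'\<close> I_eq by blast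
    then have "pts (psi D) \<subseteq> pts S'" by (rule pts_mono)
    then have "{1..2*n} \<subseteq> {1..2*k}" unfolding I(3) k(4) .
    then show False using k(2) n2 by auto
  qed
  have "cat (psi D) 1 = c1" using cat_eq[OF I(2)] c1 I_eq by blast
  moreover have "cls (psi D) c1 = R" using cls_of_conn[OF Rconn sepI] c1 I_eq by blast
  ultimately have "psi D - cls (psi D) (cat (psi D) 1) = Q" using I_eq RQdisj by blast
  then have mI_eq: "mI (psi D) = Min (pts Q)" unfolding mI_def by simp
  have "pts Q = insert u (insert b (pts (relab \<sigma> S)))" using Q_eq by simp
  moreover have "pts (relab \<sigma> S) = \<sigma> ` pts S" using pts_relab by simp
  moreover have "\<forall>x\<in>\<sigma> ` pts S. u < x"
  proof
    fix y assume "y \<in> \<sigma> ` pts S"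
    then obtain x where x: "x \<in> pts S" "y = \<sigma> x" by blast
    then have "u < x" using ptsS by blast
    then show "u < y" using x(2) u2 unfolding \<sigma>_def sig_def by simp
  qed
  moreover have "finite (pts Q)" using I(3) I_eq pts_mono by (metis finite_atLeastAtMost finite_subset sup_ge2)
  ultimately have "Min (pts Q) = u" using ub by (intro Min_eqI) auto
  then have "mI (psi D) = uD D" using mI_eq uD_eq by simp
  moreover have "psi D \<in> indec_two_comp_diagrams n"
    unfolding indec_two_comp_diagrams_def using cdI indec comps by simp
  ultimately show ?thesis using u2 uD_eq by simp
qed



lemma card_pts:
  assumes "finite M" "disj M" "ord_ch M"
  shows "card (pts M) = 2 * card M"
  using assms
proof (induction M rule: finite_induct)
  case empty then show ?case by simp
next
  case (insert c M)
  have dM: "disj M" using insert(4) unfolding disj_def by blast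
  have oM: "ord_ch M" using insert(5) unfolding ord_ch_def by blast
  have IH: "card (pts M) = 2 * card M" using insert(3)[OF dM oM] .
  have "fst c \<notin> pts M" "snd c \<notin> pts M"
    using pts_disj_notin[OF insert(4), of c M] insert(2) by auto
  moreover have "fst c \<noteq> snd c" using insert(5) by (simp add: ord_ch_def)
  moreover have "finite (pts M)" using insert(1) unfolding pts_def by simp
  ultimately have "card (pts (insert c M)) = 2 + card (pts M)" by simp
  then show ?case using IH insert(1,2) by simp
qed

lemma card2_other:
  assumes "card C = 2" "R \<in> C" "a \<in> C" "b \<in> C" "a \<noteq> R" "b \<noteq> R"
  shows "a = b"
proof -
  obtain p q where C: "C = {p, q}" using card_2_iff[THEN iffD1, OF assms(1)] by blast
  have "a = p \<or> a = q" "b = p \<or> b = q" "R = p \<or> R = q" using assms(2-4) unfolding C by blast+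
  then show ?thesis using assms(5,6) by blast
qed

lemma smono_inj: assumes "smono A f" shows "inj_on f A"
proof (rule inj_onI)
  fix x y assume "x \<in> A" "y \<in> A" "f x = f y"
  then show "x = y" using smono_iff[OF assms] by (metis less_irrefl linorder_neqE_nat)
qed

lemma phi_main:
  assumes I2: "I \<in> indec_two_comp_diagrams n"
  shows "phi I \<in> connected_diagrams n \<and> uD (phi I) = mI I \<and> 2 \<le> mI I"
proof -
  have "chord_diagram n I \<and> indecomposable n I \<and> card (components I) = 2"
    using I2 unfolding indec_two_comp_diagrams_def by (rule CollectD)
  then have cdI: "chord_diagram n I" and ind: "indecomposable n I" and c2: "card (components I) = 2"
    by blast+
  have I: "ord_ch I" "disj I" "pts I = {1..2*n}" using cdI cd_iff by blast+
  have finI: "finite I"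
  proof -
    have "I \<subseteq> {1..2*n} \<times> {1..2*n}"
    proof
      fix c assume "c \<in> I"
      then have "fst c \<in> pts I" "snd c \<in> pts I" using pts_I1 pts_I2 by blast+
      then show "c \<in> {1..2*n} \<times> {1..2*n}" unfolding I(3) by (simp add: mem_Times_iff)
    qed
    then show ?thesis by (rule finite_subset) simp
  qed
  have "I \<noteq> {}" using c2 unfolding components_cls by (metis card.empty image_empty zero_neq_numeral)
  then obtain c0 where "c0 \<in> I" by blast
  then have "fst c0 \<in> {1..2*n}" using pts_I1 I(3) by blast
  then have n1: "1 \<le> n" by simp
  have "1 \<in> pts I" unfolding I(3) using n1 by simp
  define c1 where "c1 = cat I 1"
  have c1I: "c1 \<in> I" and c11: "1 = fst c1 \<or> 1 = snd c1" using cat_in[OF I(2) \<open>1 \<in> pts I\<close>] c1_def by blast+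
  define R where "R = cls I c1"
  define Q where "Q = I - R"
  have RI: "R \<subseteq> I" using cls_sub[OF c1I] R_def by simp
  have Rconn: "conn R" using cls_conn[OF c1I] R_def by simp
  have Rsep: "sep I R" using cls_sep[OF c1I] R_def by simp
  have c1R: "c1 \<in> R" using cls_self R_def by simp
  have Qsep: "sep I Q" using sep_compl[OF Rsep] Q_def by simp
  have RQ: "nocross R Q" using Rsep Q_def sep_nocross by simp
  have I_eq: "I = R \<union> Q" using RI Q_def by blast
  have RQdisj: "R \<inter> Q = {}" using Q_def by blast
  have compR: "R \<in> components I" unfolding components_cls R_def using c1I by blast
  have Qne: "Q \<noteq> {}"
  proof
    assume "Q = {}"
    have "cls I x = R" if xI: "x \<in> I" for x
    proof -
      have "x \<in> R" using xI I_eq \<open>Q = {}\<close> by blast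
      then have "(c1,x) \<in> conn_rel I" unfolding R_def cls_def by simp
      then show ?thesis using cls_eq R_def by metis
    qed
    then have "components I \<subseteq> {R}" unfolding components_cls by blast
    then have "card (components I) \<le> card {R}" by (intro card_mono) auto
    then have "card (components I) \<le> 1" by simp
    then show False using c2 by simp
  qed
  have Qconn: "conn Q" unfolding conn_def
  proof (intro ballI)
    fix x y assume x: "x \<in> Q" and y: "y \<in> Q"
    have xI: "x \<in> I" and yI: "y \<in> I" using x y Q_def by auto
    have "cls I x \<noteq> R" using x Q_def cls_self by blast
    moreover have "cls I y \<noteq> R" using y Q_def cls_self by blast
    moreover have "cls I x \<in> components I" "cls I y \<in> components I" unfolding components_cls using xI yI by blast+
    ultimately have "cls I x = cls I y" using card2_other[OF c2 compR] by blast
    then have "(x,y) \<in> conn_rel I" using cls_self[of y I] unfolding cls_def by blast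
    then show "(x,y) \<in> conn_rel Q" using sep_closure[OF Qsep _ _ x] Q_def by blast
  qed
  have QI: "Q \<subseteq> I" using Q_def by blast
  have ptsRQ: "pts R \<inter> pts Q = {}" using pts_disj_Int[OF I(2) RI QI RQdisj] .
  have finQ: "finite (pts Q)" using I(3) I_eq by (metis finite_atLeastAtMost finite_subset pts_Un sup_ge2)
  have ptsQne: "pts Q \<noteq> {}" using Qne pts_I1 by blast
  define m where "m = Min (pts Q)"
  have mI_eq: "mI I = m" unfolding mI_def m_def Q_def R_def c1_def by simp
  have mQ: "m \<in> pts Q" using Min_in[OF finQ ptsQne] m_def by simp
  have mmin: "m \<le> x" if "x \<in> pts Q" for x using Min_le[OF finQ that] m_def by simp
  define q where "q = cat I m"
  have mI': "m \<in> pts I" using mQ I_eq by simp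
  have qI: "q \<in> I" and qm: "m = fst q \<or> m = snd q" using cat_in[OF I(2) mI'] q_def by blast+
  obtain q' where q': "q' \<in> Q" "m = fst q' \<or> m = snd q'" using mQ by (rule pts_E)
  have "q' = q" using disjD[OF I(2), of q' q m] q' qI qm QI by blast
  then have qQ: "q \<in> Q" using q' by simp
  have "fst q \<in> pts Q" using pts_I1[OF qQ] .
  then have "m \<le> fst q" using mmin by blast
  moreover have fsq: "fst q < snd q" using qI I(1) by (simp add: ord_ch_def)
  ultimately have fq: "fst q = m" using qm by linarith
  define b where "b = snd q"
  have qb: "q = (m, b)" using fq b_def by (simp add: prod_eq_iff)
  have mb: "m < b" using fsq fq b_def by simp
  have bQ: "b \<in> pts Q" using pts_I2[OF qQ] b_def by simp
  have "1 \<in> pts R" using c1R c11 pts_I1 pts_I2 by metis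
  then have "m \<noteq> 1" using mQ ptsRQ by blast
  moreover have "1 \<le> m" using mI' I(3) by simp
  ultimately have m2: "2 \<le> m" by simp
  have m2n: "m \<le> 2*n" using mI' I(3) by simp
  have below: "x \<in> pts R" if "1 \<le> x" "x < m" for x
  proof -
    have "x \<le> 2*n" using that m2n by simp
    then have "x \<in> pts I" unfolding I(3) using that by simp
    moreover have "x \<notin> pts Q" using mmin that by force
    ultimately show ?thesis using I_eq by simp
  qed
  have ptsR1: "1 \<le> x" if "x \<in> pts R" for x using that pts_mono[OF RI] I(3) by force
  have Rord: "ord_ch R" using I(1) RI unfolding ord_ch_def by blast
  have Qord: "ord_ch Q" using I(1) QI unfolding ord_ch_def by blast
  have Rnomid: "\<not> (m < x \<and> x < b)" if xR: "x \<in> pts R" for x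
  proof
    assume x: "m < x \<and> x < b"
    have "\<forall>k\<in>R. fst k \<noteq> m \<and> fst k \<noteq> b \<and> snd k \<noteq> m \<and> snd k \<noteq> b"
      using ptsRQ mQ bQ pts_I1 pts_I2 by blast
    then obtain k where "k \<in> R" "crosses k (m,b)"
      using L1[OF Rconn Rord mb _ xR] x \<open>1 \<in> pts R\<close> \<open>1 \<le> m\<close> \<open>m \<noteq> 1\<close> by force
    then show False using RQ qQ qb unfolding nocross_def by blast
  qed
  have Rne: "R \<noteq> {}" using c1R by blast
  obtain pR where pR: "pR \<in> pts R" "b < pR"
  proof (rule ccontr)
    assume "\<not> thesis"
    then have nb: "\<forall>x\<in>pts R. x \<le> b" using that by (meson not_le)
    have "pts R = {1..m-1}"
    proof
      show "pts R \<subseteq> {1..m-1}"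
      proof
        fix x assume x: "x \<in> pts R"
        have "x \<noteq> m" "x \<noteq> b" using x mQ bQ ptsRQ by blast+
        then have "x < m" using Rnomid[OF x] nb x by force
        then show "x \<in> {1..m-1}" using ptsR1[OF x] by simp
      qed
      show "{1..m-1} \<subseteq> pts R" using below by auto
    qed
    moreover have "finite R" using finI RI finite_subset by blast
    moreover have "disj R" using I(2) RI unfolding disj_def by blast
    ultimately have "m - 1 = 2 * card R" using card_pts[of R] Rord by simp
    moreover have "card R > 0" using Rne \<open>finite R\<close> by (simp add: card_gt_0_iff)
    moreover have "card R < n" using \<open>m - 1 = 2 * card R\<close> m2n m2 by arith
    ultimately have "0 < card R \<and> card R < n \<and> (\<exists>S'\<subseteq>I. {1..2*card R} = pts S')"
      using RI \<open>pts R = {1..m-1}\<close> by metis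
    then show False using ind unfolding indecomposable_def pts_split by blast
  qed
  define \<tau> where "\<tau> = tau m"
  define R' where "R' = relab \<tau> R"
  define Q0 where "Q0 = Q - {q}"
  define Q0' where "Q0' = relab \<tau> Q0"
  have Qsplit: "Q = insert q Q0" using qQ Q0_def by blast
  have D_eq: "phi I = R' \<union> insert (1,b) Q0'"
  proof -
    have "rel1 \<tau> q = (1, b)" using qb mb unfolding \<tau>_def tau_def rel1_def by auto
    moreover have "phi I = relab \<tau> R \<union> relab \<tau> (insert q Q0)"
      unfolding phi_def mI_eq \<tau>_def using I_eq Qsplit by (metis relab_Un)
    ultimately show ?thesis unfolding R'_def Q0'_def by simp
  qed
  have ptsR_nm: "pts R \<subseteq> {x. 1 \<le> x} - {m}" using ptsR1 mQ ptsRQ by blast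
  have Q0I: "Q0 \<subseteq> I" using QI Q0_def by blast
  have ptsQ0: "x \<in> pts Q0 \<Longrightarrow> m < x" for x
  proof -
    assume x: "x \<in> pts Q0"
    have "x \<in> pts Q" using x pts_mono[of Q0 Q] Q0_def by blast
    then have "m \<le> x" using mmin by blast
    moreover have "m \<notin> pts Q0" using pts_disj_notin[OF I(2) qI Q0I] qb Q0_def by auto
    ultimately show "m < x" using x by (cases "x = m") auto
  qed
  have smR: "smono (pts R) \<tau>" using smono_sub[OF tau_smono1 ptsR_nm] \<tau>_def by simp
  have smQ: "smono (pts Q) \<tau>" using smono_sub[OF tau_smono2[OF \<open>1 \<le> m\<close>]] mmin \<tau>_def by (simp add: subset_iff)
  have smRQ0: "smono (pts R \<union> pts Q0) \<tau>"
  proof -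
    have "pts R \<union> pts Q0 \<subseteq> {x. 1 \<le> x} - {m}" using ptsR_nm ptsQ0 m2 by force
    then show ?thesis using smono_sub[OF tau_smono1] \<tau>_def by simp
  qed
  have R'conn: "conn R'" using conn_relab[OF smR Rord Rconn] R'_def by simp
  have Q'conn: "conn (relab \<tau> Q)" using conn_relab[OF smQ Qord Qconn] by simp
  have Q'_eq: "relab \<tau> Q = insert (1,b) Q0'"
  proof -
    have "rel1 \<tau> q = (1, b)" using qb mb unfolding \<tau>_def tau_def rel1_def by auto
    then show ?thesis unfolding Q0'_def using Qsplit by simp
  qed
  have ptsR': "pts R' = \<tau> ` pts R" unfolding R'_def by (rule pts_relab)
  have tau_nb: "\<tau> x \<noteq> 1 \<and> \<tau> x \<noteq> b" if "x \<in> pts R" for x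
  proof -
    have "x \<noteq> m" "x \<noteq> b" "1 \<le> x" using that mQ bQ ptsRQ ptsR1 by blast+
    then show ?thesis using Rnomid[OF that] mb m2 unfolding \<tau>_def tau_def by auto
  qed
  have "\<tau> (m - 1) = m" unfolding \<tau>_def tau_def using m2 by simp
  moreover have "m - 1 \<in> pts R" using below m2 by simp
  ultimately have mR': "m \<in> pts R'" unfolding ptsR' by (metis image_eqI)
  have "\<tau> pR = pR" unfolding \<tau>_def tau_def using pR mb by simp
  then have pR': "pR \<in> pts R'" unfolding ptsR' using pR(1) by (metis image_eqI)
  have R'pts: "\<forall>k\<in>R'. fst k \<noteq> 1 \<and> fst k \<noteq> b \<and> snd k \<noteq> 1 \<and> snd k \<noteq> b"
  proof
    fix k assume kR: "k \<in> R'"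
    have "fst k \<in> pts R'" "snd k \<in> pts R'" using pts_I1[OF kR] pts_I2[OF kR] .
    then have "fst k \<in> \<tau> ` pts R" "snd k \<in> \<tau> ` pts R" unfolding ptsR' .
    then obtain x1 x2 where "x1 \<in> pts R" "fst k = \<tau> x1" "x2 \<in> pts R" "snd k = \<tau> x2" by blast
    then show "fst k \<noteq> 1 \<and> fst k \<noteq> b \<and> snd k \<noteq> 1 \<and> snd k \<noteq> b" using tau_nb by simp
  qed
  have R'ord: "ord_ch R'"
  proof -
    have "inj_on \<tau> (pts R)" using smono_inj[OF smR] .
    then show ?thesis using ord_relab Rord R'_def by blast
  qed
  have "1 < b" using mb m2 by simp
  moreover have "1 < m" using m2 by simp
  ultimately obtain k where k: "k \<in> R'" "crosses k (1,b)"
    using L1[OF R'conn R'ord _ R'pts mR' _ mb pR' disjI2[OF pR(2)]] by blast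
  have Dconn: "conn (phi I)"
    using conn_union[OF R'conn Q'conn k(1) _ k(2)] D_eq Q'_eq by simp
  have injs: "inj_on \<tau> {1..2*n}" "\<tau> ` {1..2*n} = {1..2*n}" using tau_bij[OF \<open>1 \<le> m\<close> m2n] \<tau>_def by auto
  have cdD: "chord_diagram n (phi I)" unfolding phi_def mI_eq using cd_relab[OF cdI] injs \<tau>_def by simp
  have Dne: "phi I \<noteq> {}" using D_eq by blast
  have inC: "phi I \<in> connected_diagrams n"
    unfolding connected_diagrams_def connected_diagram_def using cdD Dne Dconn unfolding conn_def by blast
  have D: "ord_ch (phi I)" "disj (phi I)" "pts (phi I) = {1..2*n}" using cdD cd_iff by blast+
  have cat1: "cat (phi I) 1 = (1,b)" using cat_eq[OF D(2)] D_eq by simp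
  have ptsQ0': "pts Q0' = \<tau> ` pts Q0" unfolding Q0'_def by (rule pts_relab)
  have "(1,b) \<notin> R'" using R'pts by fastforce
  moreover have "(1,b) \<notin> Q0'"
  proof
    assume a: "(1,b) \<in> Q0'"
    have "fst (1::nat,b) \<in> pts Q0'" using pts_I1[OF a] .
    then have "1 \<in> \<tau> ` pts Q0" unfolding ptsQ0' by simp
    then obtain x where x: "x \<in> pts Q0" "1 = \<tau> x" by (rule imageE)
    then have "m < x" using ptsQ0 by blast
    then have "\<tau> x = x" unfolding \<tau>_def tau_def by simp
    then show False using x \<open>m < x\<close> m2 by simp
  qed
  ultimately have "(R' \<union> insert (1,b) Q0') - {(1,b)} = R' \<union> Q0'" by blast
  then have D'_eq: "phi I - {cat (phi I) 1} = R' \<union> Q0'" unfolding cat1 unfolding D_eq .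
  have "\<tau> 1 = 2" unfolding \<tau>_def tau_def using m2 by simp
  moreover have "1 \<in> {fst c1, snd c1}" using c11 by auto
  then have "\<tau> 1 \<in> \<tau> ` {fst c1, snd c1}" by (rule imageI)
  ultimately have "2 \<in> {fst (rel1 \<tau> c1), snd (rel1 \<tau> c1)}" unfolding rel1_pts by simp
  moreover have "rel1 \<tau> c1 \<in> R'" using c1R R'_def relab_mem by blast
  ultimately have cat2: "cat (phi I) 2 = rel1 \<tau> c1" using cat_eq[OF D(2)] D_eq by blast
  have Q0ord: "ord_ch Q0" using Qord Q0_def unfolding ord_ch_def by blast
  have RQ0: "nocross R Q0" using RQ Q0_def unfolding nocross_def by blast
  have R'Q0': "nocross R' Q0'" using nocross_relab[OF smRQ0 Rord Q0ord RQ0] R'_def Q0'_def by simp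
  have sepD': "sep (R' \<union> Q0') R'" unfolding sep_nocross using R'Q0' unfolding nocross_def by blast
  have clsR': "cls (R' \<union> Q0') (rel1 \<tau> c1) = R'"
    using cls_of_conn[OF R'conn sepD'] \<open>rel1 \<tau> c1 \<in> R'\<close> by blast
  have uD_eq: "uD (phi I) = Max {x \<in> pts R'. x < b}"
    unfolding uD_def unfolding D'_eq cat2 unfolding clsR' cat1 by simp
  have finR': "finite (pts R')" using D(3) D_eq by (metis finite_atLeastAtMost finite_subset pts_Un sup_ge1)
  have "Max {x \<in> pts R'. x < b} = m"
  proof (rule Max_eqI)
    show "finite {x \<in> pts R'. x < b}" using finR' by simp
    show "m \<in> {x \<in> pts R'. x < b}" using mR' mb by simp
    fix y assume "y \<in> {x \<in> pts R'. x < b}"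
    then obtain x where x: "x \<in> pts R" "y = \<tau> x" "y < b" unfolding ptsR' by blast
    show "y \<le> m"
    proof (cases "x < m")
      case True then show ?thesis using x unfolding \<tau>_def tau_def by simp
    next
      case False
      then have "x \<noteq> m" "x \<noteq> b" using x mQ bQ ptsRQ by blast+
      then have "b < x" using False Rnomid[OF x(1)] by simp
      then show ?thesis using x mb unfolding \<tau>_def tau_def by simp
    qed
  qed
  then show ?thesis using inC uD_eq mI_eq m2 by simp
qed



lemma bij_main:
  assumes "2 \<le> n"
  shows "bij_betw psi (connected_diagrams n) (indec_two_comp_diagrams n)"
proof (rule bij_betw_byWitness[where f' = phi])
  show "\<forall>D\<in>connected_diagrams n. phi (psi D) = D"
  proof
    fix D assume "D \<in> connected_diagrams n"
    then have "chord_diagram n D \<and> connected_diagram D" unfolding connected_diagrams_def by (rule CollectD)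
    then have cd: "chord_diagram n D" and cn: "connected_diagram D" by blast+
    have pm0: "psi D \<in> indec_two_comp_diagrams n \<and> mI (psi D) = uD D \<and> 2 \<le> uD D"
      using psi_main[OF assms cd cn] .
    then have pm: "mI (psi D) = uD D" "2 \<le> uD D" by blast+
    have D: "ord_ch D" "pts D = {1..2*n}" using cd cd_iff by blast+
    have "\<forall>x\<in>pts D. tau (uD D) (sig (uD D) x) = x"
    proof
      fix x assume "x \<in> pts D"
      then have "1 \<le> x" unfolding D(2) by simp
      then show "tau (uD D) (sig (uD D) x) = x" using tau_sig pm(2) by simp
    qed
    then have "relab (tau (uD D)) (relab (sig (uD D)) D) = D" using relab_comp_id D(1) by blast
    then show "phi (psi D) = D" unfolding phi_def unfolding pm(1) unfolding psi_def .
  qed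
  show "\<forall>I\<in>indec_two_comp_diagrams n. psi (phi I) = I"
  proof
    fix I assume I2: "I \<in> indec_two_comp_diagrams n"
    have pm0: "phi I \<in> connected_diagrams n \<and> uD (phi I) = mI I \<and> 2 \<le> mI I" using phi_main[OF I2] .
    then have pm: "uD (phi I) = mI I" "2 \<le> mI I" by blast+
    have "chord_diagram n I \<and> indecomposable n I \<and> card (components I) = 2"
      using I2 unfolding indec_two_comp_diagrams_def by (rule CollectD)
    then have cd: "chord_diagram n I" by blast
    have I: "ord_ch I" "pts I = {1..2*n}" using cd cd_iff by blast+
    have "\<forall>x\<in>pts I. sig (mI I) (tau (mI I) x) = x"
    proof
      fix x assume "x \<in> pts I"
      then have "1 \<le> x" unfolding I(2) by simp
      then show "sig (mI I) (tau (mI I) x) = x" using sig_tau pm(2) by simp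
    qed
    then have "relab (sig (mI I)) (relab (tau (mI I)) I) = I" using relab_comp_id I(1) by blast
    then show "psi (phi I) = I" unfolding psi_def unfolding pm(1) unfolding phi_def .
  qed
  show "psi ` connected_diagrams n \<subseteq> indec_two_comp_diagrams n"
  proof
    fix y assume "y \<in> psi ` connected_diagrams n"
    then obtain D where D: "D \<in> connected_diagrams n" "y = psi D" by blast
    from D(1) have "chord_diagram n D \<and> connected_diagram D" unfolding connected_diagrams_def by (rule CollectD)
    then have "psi D \<in> indec_two_comp_diagrams n \<and> mI (psi D) = uD D \<and> 2 \<le> uD D"
      using psi_main[OF assms] by (elim conjE)
    then show "y \<in> indec_two_comp_diagrams n" using D(2) by blast
  qed
  show "phi ` indec_two_comp_diagrams n \<subseteq> connected_diagrams n"
  proof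
    fix y assume "y \<in> phi ` indec_two_comp_diagrams n"
    then obtain I where I: "I \<in> indec_two_comp_diagrams n" "y = phi I" by blast
    have "phi I \<in> connected_diagrams n \<and> uD (phi I) = mI I \<and> 2 \<le> mI I" using phi_main[OF I(1)] .
    then show "y \<in> connected_diagrams n" using I(2) by blast
  qed
qed

lemma cd0: "chord_diagram 0 M \<Longrightarrow> M = {}"
proof -
  assume "chord_diagram 0 M"
  then have "pts M = {}" using cd_iff by simp
  then show "M = {}" using pts_I1 by blast
qed

lemma cd1: "chord_diagram 1 M \<longleftrightarrow> M = {(1,2)}"
proof
  assume cd: "chord_diagram 1 M"
  then have M: "ord_ch M" "pts M = {1,2}" using cd_iff by auto
  have sub: "M \<subseteq> {(1,2)}"
  proof
    fix c assume c: "c \<in> M"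
    have "fst c \<in> {1,2}" "snd c \<in> {1,2}" using pts_I1[OF c] pts_I2[OF c] M(2) by auto
    moreover have "fst c < snd c" using c M(1) by (simp add: ord_ch_def)
    ultimately have "c = (1,2)" by (auto simp: prod_eq_iff)
    then show "c \<in> {(1,2)}" by simp
  qed
  have "M \<noteq> {}" using M(2) by auto
  then show "M = {(1,2)}" using sub by blast
next
  assume "M = {(1,2)}"
  moreover have "chord_diagram 1 {(1::nat,2::nat)}" unfolding cd_iff ord_ch_def disj_def
    by (auto simp: pts_def)
  ultimately show "chord_diagram 1 M" by simp
qed

lemma C0: "connected_diagrams 0 = {}"
  unfolding connected_diagrams_def connected_diagram_def using cd0 by blast

lemma I0: "indec_two_comp_diagrams 0 = {}"
proof (rule ccontr)
  assume "indec_two_comp_diagrams 0 \<noteq> {}"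
  then obtain M where "M \<in> indec_two_comp_diagrams 0" by blast
  then have "chord_diagram 0 M \<and> indecomposable 0 M \<and> card (components M) = 2"
    unfolding indec_two_comp_diagrams_def by (rule CollectD)
  moreover have "components {} = {}" unfolding components_cls by simp
  ultimately show False using cd0 by force
qed

lemma C1: "connected_diagrams 1 = {{(1,2)}}"
proof -
  have "connected_diagram {(1::nat,2::nat)}" unfolding connected_diagram_def by simp
  then show ?thesis unfolding connected_diagrams_def using cd1 by blast
qed

lemma I1: "indec_two_comp_diagrams 1 = {}"
proof (rule ccontr)
  assume "indec_two_comp_diagrams 1 \<noteq> {}"
  then obtain M where "M \<in> indec_two_comp_diagrams 1" by blast
  then have "chord_diagram 1 M \<and> indecomposable 1 M \<and> card (components M) = 2"
    unfolding indec_two_comp_diagrams_def by (rule CollectD)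
  then have M: "M = {(1,2)}" "card (components M) = 2" using cd1 by blast+
  have "components M = {cls M (1,2)}" unfolding components_cls M(1) by simp
  then show False using M(2) by simp
qed

theorem lemma3p6p1:
  shows "(\<forall>n\<ge>2. \<exists>f. bij_betw f (connected_diagrams n) (indec_two_comp_diagrams n))
         \<and> I2_gf = C_gf - fps_X"
proof
  show "\<forall>n\<ge>2. \<exists>f. bij_betw f (connected_diagrams n) (indec_two_comp_diagrams n)"
    using bij_main by blast
  show "I2_gf = C_gf - fps_X"
  proof (rule fps_ext)
    fix k
    show "fps_nth I2_gf k = fps_nth (C_gf - fps_X) k"
    proof (cases "k \<ge> 2")
      case True
      then have "card (connected_diagrams k) = card (indec_two_comp_diagrams k)"
        using bij_betw_same_card bij_main by blast
      then show ?thesis using True unfolding I2_gf_def C_gf_def by (simp add: fps_X_nth)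
    next
      case False
      then have "k = 0 \<or> k = 1" by auto
      then show ?thesis unfolding I2_gf_def C_gf_def using C0 I0 C1 I1 by (auto simp: fps_X_nth)
    qed
  qed
qed

end
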